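(* Let $n\in\mathbb N$, $\delta>0$, and let $d$ be a metric on $\mathbb R^n$ induced by a norm. Let $w_1,\dots,w_N$ be contractions on $(\mathbb R^n,d)$ with contractivity factors $\lambda_i\in[0,1)$, let $\lambda_{max}=\max_i\lambda_i$, and let $A_\infty$ be the attractor of the hyperbolic IFS $\{\mathbb R^n;w_1,\dots,w_N;q_1,\dots,q_N\}$ with constant probabilities $q_i\in(0,1]$, $\sum_iq_i=1$. Let $\{\mathcal D^n(\delta);\tilde w_1,\dots,\tilde w_N;p_1,\dots,p_N\}$ be a DIFS in which $\tilde w_i$ is the $\delta$-roundoff of $w_i$. Then, independently of the values of the probabilities $p_i(\cdot)$ and $q_i$, for every positive recurrent communication class $\mathcal A_k^+$ of the Markov chain associated with the DIFS, the Hausdorff distance (induced by $d$) satisfies $$h(\mathcal A_k^+,A_\infty)\le\theta(1-\lambda_{max})^{-1}.$$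
   Context: For $m\in\mathbb Z^n$, $C_\delta(m)=\prod_{j=1}^n[(m_j-\tfrac12)\delta,(m_j+\tfrac12)\delta)$; $\mathcal D^n(\delta)=\{\delta m:m\in\mathbb Z^n\}\subset\mathbb R^n$. The $\delta$-roundoff of $x\in\mathbb R^n$ is $\tilde x=\delta m$ where $x\in C_\delta(m)$; the $\delta$-roundoff of $w:\mathbb R^n\to\mathbb R^n$ is $\tilde w(\tilde x)=\widetilde{w(\tilde x)}$ on $\mathcal D^n(\delta)$. $\theta:=\tfrac12\operatorname{diam}_d(C_\delta(0))$. The attractor of a hyperbolic IFS is the unique nonempty compact $A_\infty\subset\mathbb R^n$ with $A_\infty=\bigcup_i w_i(A_\infty)$. A DIFS $\{S;\tilde w_1,\dots,\tilde w_N;p_1,\dots,p_N\}$ consists of $S\subset\mathcal D^n(\delta)$, maps $\tilde w_i:S\to S$ and functions $p_i:S\to(0,1]$ with $\sum_ip_i(\tilde x)=1$; its associated Markov chain has transition probabilities $P(\tilde x,\tilde y)=\sum_ip_i(\tilde x)\mathbf 1_{\{\tilde y\}}(\tilde w_i(\tilde x))$. State $\tilde y$ is accessible from $\tilde x$ if $P^k(\tilde x,\tilde y)>0$ for some $k\ge1$; two states communicate if each is accessible from the other; a communication class is a maximal nonempty set of states any two of which (not necessarily distinct) communicate. A state is recurrent if the chain started there returns to it in finitely many steps a.s., and positive recurrent if moreover the expected return time is finite; a positive recurrent communication class is a communication class of positive recurrent states. *)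

theory Defs
  imports "HOL-Analysis.Analysis"
begin

definition is_norm :: "(real^'n \<Rightarrow> real) \<Rightarrow> bool" where
  "is_norm nrm \<longleftrightarrow>
     (\<forall>x. 0 \<le> nrm x) \<and> (\<forall>x. nrm x = 0 \<longleftrightarrow> x = 0) \<and>
     (\<forall>c x. nrm (c *\<^sub>R x) = \<bar>c\<bar> * nrm x) \<and>
     (\<forall>x y. nrm (x + y) \<le> nrm x + nrm y)"

definition grid :: "real \<Rightarrow> (real^'n) set" where
  "grid \<delta> = {x. \<exists>m::int^'n. x = (\<chi> j. \<delta> * of_int (m $ j))}"

definition cell0 :: "real \<Rightarrow> (real^'n) set" where
  "cell0 \<delta> = {x. \<forall>j. - \<delta> / 2 \<le> x $ j \<and> x $ j < \<delta> / 2}"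

text \<open>delta-roundoff: x in C_delta(m) iff m_j = floor(x_j/delta + 1/2).\<close>
definition roundoff :: "real \<Rightarrow> real^'n \<Rightarrow> real^'n" where
  "roundoff \<delta> x = (\<chi> j. \<delta> * of_int \<lfloor>x $ j / \<delta> + 1/2\<rfloor>)"

definition theta :: "(real^'n \<Rightarrow> real) \<Rightarrow> real \<Rightarrow> real" where
  "theta nrm \<delta> = (SUP p \<in> cell0 \<delta> \<times> cell0 \<delta>. nrm (fst p - snd p)) / 2"

definition hausdorff_d :: "(real^'n \<Rightarrow> real) \<Rightarrow> (real^'n) set \<Rightarrow> (real^'n) set \<Rightarrow> ereal" where
  "hausdorff_d nrm A B =
     max (SUP a\<in>A. INF b\<in>B. ereal (nrm (a - b))) (SUP b\<in>B. INF a\<in>A. ereal (nrm (a - b)))"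

fun Pk :: "nat \<Rightarrow> (nat \<Rightarrow> 'a \<Rightarrow> 'a) \<Rightarrow> (nat \<Rightarrow> 'a \<Rightarrow> real) \<Rightarrow> nat \<Rightarrow> 'a \<Rightarrow> 'a \<Rightarrow> real" where
  "Pk N wt p 0 x y = (if x = y then 1 else 0)"
| "Pk N wt p (Suc k) x y = (\<Sum>i<N. p i x * Pk N wt p k (wt i x) y)"

text \<open>First-passage probabilities f^(k)(x,y): probability that the chain started at x
  hits y for the first time (at a time >= 1) at time k.\<close>
fun Fk :: "nat \<Rightarrow> (nat \<Rightarrow> 'a \<Rightarrow> 'a) \<Rightarrow> (nat \<Rightarrow> 'a \<Rightarrow> real) \<Rightarrow> nat \<Rightarrow> 'a \<Rightarrow> 'a \<Rightarrow> real" where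
  "Fk N wt p 0 x y = 0"
| "Fk N wt p (Suc k) x y =
     (\<Sum>i<N. p i x * (if wt i x = y then (if k = 0 then 1 else 0) else Fk N wt p k (wt i x) y))"

definition accessible :: "nat \<Rightarrow> (nat \<Rightarrow> 'a \<Rightarrow> 'a) \<Rightarrow> (nat \<Rightarrow> 'a \<Rightarrow> real) \<Rightarrow> 'a \<Rightarrow> 'a \<Rightarrow> bool" where
  "accessible N wt p x y \<longleftrightarrow> (\<exists>k\<ge>1. Pk N wt p k x y > 0)"

definition communicate :: "nat \<Rightarrow> (nat \<Rightarrow> 'a \<Rightarrow> 'a) \<Rightarrow> (nat \<Rightarrow> 'a \<Rightarrow> real) \<Rightarrow> 'a \<Rightarrow> 'a \<Rightarrow> bool" where
  "communicate N wt p x y \<longleftrightarrow> accessible N wt p x y \<and> accessible N wt p y x"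

definition comm_class :: "'a set \<Rightarrow> nat \<Rightarrow> (nat \<Rightarrow> 'a \<Rightarrow> 'a) \<Rightarrow> (nat \<Rightarrow> 'a \<Rightarrow> real) \<Rightarrow> 'a set \<Rightarrow> bool" where
  "comm_class S N wt p C \<longleftrightarrow> C \<noteq> {} \<and> C \<subseteq> S \<and>
     (\<forall>x\<in>C. \<forall>y\<in>C. communicate N wt p x y) \<and>
     (\<forall>x\<in>C. \<forall>y\<in>S. communicate N wt p x y \<longrightarrow> y \<in> C)"

definition recurrent :: "nat \<Rightarrow> (nat \<Rightarrow> 'a \<Rightarrow> 'a) \<Rightarrow> (nat \<Rightarrow> 'a \<Rightarrow> real) \<Rightarrow> 'a \<Rightarrow> bool" where
  "recurrent N wt p x \<longleftrightarrow> summable (\<lambda>k. Fk N wt p k x x) \<and> (\<Sum>k. Fk N wt p k x x) = 1"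

definition pos_recurrent :: "nat \<Rightarrow> (nat \<Rightarrow> 'a \<Rightarrow> 'a) \<Rightarrow> (nat \<Rightarrow> 'a \<Rightarrow> real) \<Rightarrow> 'a \<Rightarrow> bool" where
  "pos_recurrent N wt p x \<longleftrightarrow> recurrent N wt p x \<and> summable (\<lambda>k. real k * Fk N wt p k x x)"

definition pos_rec_class :: "'a set \<Rightarrow> nat \<Rightarrow> (nat \<Rightarrow> 'a \<Rightarrow> 'a) \<Rightarrow> (nat \<Rightarrow> 'a \<Rightarrow> real) \<Rightarrow> 'a set \<Rightarrow> bool" where
  "pos_rec_class S N wt p C \<longleftrightarrow> comm_class S N wt p C \<and> (\<forall>x\<in>C. pos_recurrent N wt p x)"

end

theory Submission
  imports Defs
begin

locale mc =
  fixes S :: "'a set" and N :: nat and wt :: "nat \<Rightarrow> 'a \<Rightarrow> 'a" and p :: "nat \<Rightarrow> 'a \<Rightarrow> real"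
  assumes wtS: "\<And>i x. i < N \<Longrightarrow> x \<in> S \<Longrightarrow> wt i x \<in> S"
    and pS: "\<And>i x. i < N \<Longrightarrow> x \<in> S \<Longrightarrow> 0 < p i x"
    and psum: "\<And>x. x \<in> S \<Longrightarrow> (\<Sum>i<N. p i x) = 1"
begin

lemma p_le1: "i < N \<Longrightarrow> x \<in> S \<Longrightarrow> p i x \<le> 1"
proof -
  assume i: "i < N" and x: "x \<in> S"
  have "p i x \<le> (\<Sum>j<N. p j x)"
    by (rule member_le_sum) (use i x pS in \<open>auto intro: less_imp_le\<close>)
  then show ?thesis using psum[OF x] by simp
qed

lemma Pk_nonneg: "x \<in> S \<Longrightarrow> 0 \<le> Pk N wt p k x y"
  by (induction k arbitrary: x) (auto intro!: sum_nonneg mult_nonneg_nonneg less_imp_le[OF pS] wtS)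

lemma Fk_nonneg: "x \<in> S \<Longrightarrow> 0 \<le> Fk N wt p k x y"
proof (induction k arbitrary: x)
  case 0 then show ?case by simp
next
  case (Suc k)
  show ?case unfolding Fk.simps
  proof (rule sum_nonneg)
    fix i assume i: "i \<in> {..<N}"
    have w: "wt i x \<in> S" using wtS i Suc.prems by auto
    show "0 \<le> p i x * (if wt i x = y then (if k = 0 then 1 else 0) else Fk N wt p k (wt i x) y)"
      using Suc.IH[OF w] pS[of i x] i Suc.prems by (intro mult_nonneg_nonneg) auto
  qed
qed

lemma Fk_le_Pk: "x \<in> S \<Longrightarrow> Fk N wt p k x y \<le> Pk N wt p k x y"
proof (induction k arbitrary: x)
  case 0 then show ?case by simp
next
  case (Suc k)
  show ?case unfolding Fk.simps Pk.simps
  proof (rule sum_mono)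
    fix i assume i: "i \<in> {..<N}"
    have w: "wt i x \<in> S" using wtS i Suc.prems by auto
    have "(if wt i x = y then (if k = 0 then 1 else 0) else Fk N wt p k (wt i x) y) \<le> Pk N wt p k (wt i x) y"
      using Suc.IH[OF w] Pk_nonneg[OF w, of k y] by auto
    then show "p i x * (if wt i x = y then (if k = 0 then 1 else 0) else Fk N wt p k (wt i x) y) \<le> p i x * Pk N wt p k (wt i x) y"
      using pS[of i x] i Suc.prems by (intro mult_left_mono) auto
  qed
qed

lemma Pk_step: assumes "x \<in> S" "Pk N wt p (Suc m) x y > 0" shows "\<exists>j<N. Pk N wt p m (wt j x) y > 0"
proof (rule ccontr)
  assume "\<not> ?thesis"
  then have "\<forall>j<N. Pk N wt p m (wt j x) y \<le> 0" by auto
  then have "Pk N wt p (Suc m) x y \<le> 0" unfolding Pk.simps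
    by (intro sum_nonpos mult_nonneg_nonpos) (use pS assms(1) in \<open>auto intro: less_imp_le\<close>)
  then show False using assms(2) by simp
qed

lemma Pk_S: "x \<in> S \<Longrightarrow> Pk N wt p m x y > 0 \<Longrightarrow> y \<in> S"
proof (induction m arbitrary: x)
  case 0 then show ?case by (simp split: if_splits)
next
  case (Suc m)
  then obtain j where "j < N" "Pk N wt p m (wt j x) y > 0" using Pk_step by blast
  then show ?case using Suc wtS by blast
qed

lemma Pk_one: assumes "x \<in> S" "i < N" shows "Pk N wt p (Suc 0) x (wt i x) > 0"
proof -
  have "p i x * (if wt i x = wt i x then 1 else 0) \<le> (\<Sum>j<N. p j x * (if wt j x = wt i x then 1 else 0))"
    by (rule member_le_sum) (use assms pS in \<open>auto intro: less_imp_le\<close>)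
  then show ?thesis using pS[OF assms(2,1)] by simp
qed

definition T :: "'a \<Rightarrow> nat \<Rightarrow> 'a \<Rightarrow> real" where
  "T c n x = (\<Sum>k<n. Fk N wt p k x c)"

lemma T_rec: "T c (Suc n) x = (\<Sum>i<N. p i x * (if wt i x = c then (if n = 0 then 0 else 1) else T c n (wt i x)))"
proof -
  have "T c (Suc n) x = (\<Sum>k<n. Fk N wt p (Suc k) x c)" unfolding T_def sum.lessThan_Suc_shift by simp
  also have "\<dots> = (\<Sum>k<n. \<Sum>i<N. p i x * (if wt i x = c then (if k = 0 then 1 else 0) else Fk N wt p k (wt i x) c))" by simp
  also have "\<dots> = (\<Sum>i<N. \<Sum>k<n. p i x * (if wt i x = c then (if k = 0 then 1 else 0) else Fk N wt p k (wt i x) c))" by (rule sum.swap)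
  also have "\<dots> = (\<Sum>i<N. p i x * (if wt i x = c then (if n = 0 then 0 else 1) else T c n (wt i x)))"
  proof (rule sum.cong[OF refl])
    fix i
    show "(\<Sum>k<n. p i x * (if wt i x = c then (if k = 0 then 1 else 0) else Fk N wt p k (wt i x) c)) = p i x * (if wt i x = c then (if n = 0 then 0 else 1) else T c n (wt i x))"
    proof (cases "wt i x = c")
      case True
      then show ?thesis by (simp add: sum_distrib_left[symmetric] sum.delta' lessThan_def)
    next
      case False
      then show ?thesis by (simp add: sum_distrib_left[symmetric] T_def)
    qed
  qed
  finally show ?thesis .
qed

lemma T_bound: "x \<in> S \<Longrightarrow> 0 \<le> T c n x \<and> T c n x \<le> 1"
proof (induction n arbitrary: x)
  case 0 then show ?case by (simp add: T_def)
next
  case (Suc n)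
  have V: "0 \<le> (if wt i x = c then (if n = 0 then 0 else 1) else T c n (wt i x)) \<and>
           (if wt i x = c then (if n = 0 then 0 else 1) else T c n (wt i x)) \<le> (1::real)" if "i < N" for i
    using Suc.IH[OF wtS[OF that Suc.prems]] by auto
  have "0 \<le> T c (Suc n) x" unfolding T_rec
    by (intro sum_nonneg mult_nonneg_nonneg) (use V pS Suc.prems in \<open>auto intro: less_imp_le\<close>)
  moreover have "T c (Suc n) x \<le> (\<Sum>i<N. p i x)" unfolding T_rec
    by (intro sum_mono mult_left_le) (use V pS Suc.prems in \<open>auto intro: less_imp_le\<close>)
  ultimately show ?case using psum[OF Suc.prems] by simp
qed

lemma key:
  assumes y: "y \<in> S" "\<not> accessible N wt p y c"
  shows "x \<in> S \<Longrightarrow> Pk N wt p m x y > 0 \<Longrightarrow>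
    (\<exists>e>0. e \<le> 1 \<and> (\<forall>n. T c n x \<le> 1 - e)) \<or> (\<exists>e>0. \<forall>n. T c n c \<le> 1 - e)"
proof (induction m arbitrary: x)
  case 0
  then have xy: "x = y" by (simp split: if_splits)
  have "Fk N wt p k y c = 0" for k
  proof (cases k)
    case 0 then show ?thesis by simp
  next
    case (Suc k')
    then have "\<not> Pk N wt p k y c > 0" using y(2) unfolding accessible_def by auto
    then show ?thesis using Fk_le_Pk[OF y(1), of k c] Fk_nonneg[OF y(1), of k c] by linarith
  qed
  then have "T c n y = 0" for n by (simp add: T_def)
  then show ?case using xy by (intro disjI1 exI[of _ 1]) auto
next
  case (Suc m)
  obtain j where j: "j < N" "Pk N wt p m (wt j x) y > 0" using Pk_step[OF Suc.prems] by blast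
  define x1 where "x1 = wt j x"
  have x1S: "x1 \<in> S" using wtS j Suc.prems x1_def by auto
  from Suc.IH[OF x1S] j x1_def
  consider (R) "\<exists>e>0. \<forall>n. T c n c \<le> 1 - e" | (L) e' where "e' > 0" "e' \<le> 1" "\<forall>n. T c n x1 \<le> 1 - e'"
    by auto
  then show ?case
  proof cases
    case R then show ?thesis by blast
  next
    case L
    show ?thesis
    proof (cases "x1 = c")
      case True
      then show ?thesis using L by blast
    next
      case False
      have pj: "0 < p j x" "p j x \<le> 1" using pS[OF j(1) Suc.prems(1)] p_le1[OF j(1) Suc.prems(1)] by auto
      have "T c n x \<le> 1 - p j x * e'" for n
      proof (cases n)
        case 0
        have "p j x * e' \<le> 1 * 1" using pj L by (intro mult_mono) auto
        then show ?thesis using 0 by (simp add: T_def)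
      next
        case (Suc n')
        have "T c n x \<le> (\<Sum>i<N. p i x - (if i = j then p i x * e' else 0))"
          unfolding Suc T_rec
        proof (rule sum_mono)
          fix i assume i: "i \<in> {..<N}"
          have V: "(if wt i x = c then (if n' = 0 then 0 else 1) else T c n' (wt i x)) \<le> (1::real)"
            using T_bound[OF wtS[OF _ Suc.prems(1)], of i c n'] i by auto
          show "p i x * (if wt i x = c then (if n' = 0 then 0 else 1) else T c n' (wt i x)) \<le> p i x - (if i = j then p i x * e' else 0)"
          proof (cases "i = j")
            case True
            then have "p i x * (if wt i x = c then (if n' = 0 then 0 else 1) else T c n' (wt i x)) \<le> p i x * (1 - e')"
              using L False x1_def pj by (intro mult_left_mono) auto
            then show ?thesis using True by (simp add: algebra_simps)
          next
            case False
            then show ?thesis using V pS[OF _ Suc.prems(1), of i] i by (simp add: mult_left_le)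
          qed
        qed
        also have "\<dots> = 1 - p j x * e'"
          using j(1) by (simp add: sum_subtractf psum[OF Suc.prems(1)] sum.delta)
        finally show ?thesis .
      qed
      then show ?thesis using pj L by (intro disjI1 exI[of _ "p j x * e'"]) (auto intro: mult_pos_pos order_trans[OF _ pj(2)] mult_le_one)
    qed
  qed
qed

lemma closed:
  assumes c: "c \<in> S" "summable (\<lambda>k. Fk N wt p k c c)" "(\<Sum>k. Fk N wt p k c c) = 1"
    and m: "Pk N wt p m c y > 0"
  shows "accessible N wt p y c"
proof (rule ccontr)
  assume na: "\<not> accessible N wt p y c"
  have y: "y \<in> S" using Pk_S[OF c(1) m] .
  from key[OF y na c(1) m] obtain e where e: "e > 0" "\<forall>n. T c n c \<le> 1 - e" by blast
  have "(\<lambda>n. T c n c) \<longlonglongrightarrow> 1" using summable_LIMSEQ[OF c(2)] c(3) by (simp add: T_def)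
  then have "1 \<le> 1 - e" by (rule LIMSEQ_le_const2) (use e in auto)
  then show False using e by simp
qed

end

lemma nrm_zero: "is_norm nrm \<Longrightarrow> nrm 0 = 0" unfolding is_norm_def by auto

lemma nrm_sum: assumes "is_norm nrm" "finite I"
  shows "nrm (\<Sum>j\<in>I. f j) \<le> (\<Sum>j\<in>I. nrm (f j))"
  using assms(2)
proof (induction I rule: finite_induct)
  case empty then show ?case using nrm_zero[OF assms(1)] by simp
next
  case (insert a F)
  then show ?case using assms(1) unfolding is_norm_def
    by (simp add: sum.insert) (smt (verit))
qed

lemma nrm_scale: "is_norm nrm \<Longrightarrow> nrm (c *\<^sub>R x) = \<bar>c\<bar> * nrm x" unfolding is_norm_def by auto
lemma nrm_nonneg: "is_norm nrm \<Longrightarrow> 0 \<le> nrm x" unfolding is_norm_def by auto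
lemma nrm_tri: "is_norm nrm \<Longrightarrow> nrm (x + y) \<le> nrm x + nrm y" unfolding is_norm_def by auto
lemma nrm_minus: assumes "is_norm nrm" shows "nrm (a - b) = nrm (b - a)"
proof -
  have "nrm (a - b) = nrm ((-1::real) *\<^sub>R (b - a))" by simp
  also have "\<dots> = nrm (b - a)" using nrm_scale[OF assms, of "-1" "b - a"] by simp
  finally show ?thesis .
qed
lemma nrm_tri3: assumes "is_norm nrm" shows "nrm (a - b) \<le> nrm (a - z) + nrm (z - b)"
  using nrm_tri[OF assms, of "a - z" "z - b"] by simp

lemma nrm_basis: fixes v :: "real^'n" assumes "is_norm nrm"
  shows "nrm v \<le> (\<Sum>j\<in>UNIV. \<bar>v$j\<bar> * nrm (axis j 1))"
proof -
  have "v = (\<Sum>j\<in>UNIV. (v$j) *\<^sub>R axis j 1)"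
    using basis_expansion[of v] by (simp add: scalar_mult_eq_scaleR)
  then have "nrm v = nrm (\<Sum>j\<in>UNIV. (v$j) *\<^sub>R axis j 1)" by simp
  also have "\<dots> \<le> (\<Sum>j\<in>UNIV. nrm ((v$j) *\<^sub>R axis j 1))" by (rule nrm_sum[OF assms]) simp
  also have "\<dots> = (\<Sum>j\<in>UNIV. \<bar>v$j\<bar> * nrm (axis j 1))" using nrm_scale[OF assms] by simp
  finally show ?thesis .
qed

lemma nrm_le_norm: fixes v :: "real^'n" assumes "is_norm nrm"
  shows "nrm v \<le> (\<Sum>j\<in>UNIV. nrm (axis j 1 :: real^'n)) * norm v"
proof -
  have "nrm v \<le> (\<Sum>j\<in>UNIV. \<bar>v$j\<bar> * nrm (axis j 1))" by (rule nrm_basis[OF assms])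
  also have "\<dots> \<le> (\<Sum>j\<in>UNIV. norm v * nrm (axis j 1 :: real^'n))"
    by (intro sum_mono mult_right_mono component_le_norm_cart nrm_nonneg[OF assms])
  finally show ?thesis by (simp add: sum_distrib_left mult.commute)
qed

lemma theta_bdd: fixes \<delta> :: real assumes "is_norm nrm" "\<delta> > 0"
  shows "bdd_above ((\<lambda>p. nrm (fst p - snd p)) ` (cell0 \<delta> \<times> cell0 \<delta> :: ((real^'n) \<times> (real^'n)) set))"
proof (rule bdd_aboveI2)
  fix q :: "(real^'n) \<times> (real^'n)" assume q: "q \<in> cell0 \<delta> \<times> cell0 \<delta>"
  have "nrm (fst q - snd q) \<le> (\<Sum>j\<in>UNIV. \<bar>(fst q - snd q)$j\<bar> * nrm (axis j 1 :: real^'n))" by (rule nrm_basis[OF assms(1)])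
  also have "\<dots> \<le> (\<Sum>j\<in>UNIV. \<delta> * nrm (axis j 1 :: real^'n))"
  proof (intro sum_mono mult_right_mono nrm_nonneg[OF assms(1)])
    fix j
    have "-\<delta>/2 \<le> fst q $ j" "fst q $ j < \<delta>/2" "-\<delta>/2 \<le> snd q $ j" "snd q $ j < \<delta>/2"
      using q unfolding cell0_def mem_Times_iff by auto
    then show "\<bar>(fst q - snd q)$j\<bar> \<le> \<delta>" unfolding abs_le_iff by simp
  qed
  finally show "nrm (fst q - snd q) \<le> (\<Sum>j\<in>UNIV. \<delta> * nrm (axis j 1 :: real^'n))" .
qed

lemma cell_theta: fixes v :: "real^'n" assumes "is_norm nrm" "\<delta> > 0" "v \<in> cell0 \<delta>"
  shows "nrm v \<le> theta nrm \<delta>"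
proof (rule field_le_mult_one_interval)
  fix t :: real assume t: "0 < t" "t < 1"
  have in1: "t *\<^sub>R v \<in> cell0 \<delta>" and in2: "- (t *\<^sub>R v) \<in> cell0 \<delta>"
  proof -
    have "\<bar>v$j\<bar> \<le> \<delta>/2" for j
    proof -
      have "-\<delta>/2 \<le> v $ j" "v $ j < \<delta>/2" using assms(3) unfolding cell0_def by auto
      then show ?thesis unfolding abs_le_iff by linarith
    qed
    have tv: "\<bar>t * v$j\<bar> < \<delta>/2" for j
    proof -
      have "\<bar>t * v$j\<bar> = t * \<bar>v$j\<bar>" using t by (simp add: abs_mult)
      also have "\<dots> \<le> t * (\<delta>/2)" using t \<open>\<bar>v$j\<bar> \<le> \<delta>/2\<close> by (intro mult_left_mono) auto
      also have "\<dots> < \<delta>/2" using t assms(2) by simp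
      finally show ?thesis .
    qed
    have A: "-(\<delta>/2) \<le> (t *\<^sub>R v)$j \<and> (t *\<^sub>R v)$j < \<delta>/2" for j
      using tv[of j] unfolding abs_less_iff by simp
    have B: "-(\<delta>/2) \<le> (- (t *\<^sub>R v))$j \<and> (- (t *\<^sub>R v))$j < \<delta>/2" for j
      using tv[of j] unfolding abs_less_iff by simp
    show "t *\<^sub>R v \<in> cell0 \<delta>" unfolding cell0_def using A by simp
    show "- (t *\<^sub>R v) \<in> cell0 \<delta>" unfolding cell0_def using B by (simp only: mem_Collect_eq minus_divide_left) blast
  qed
  have "nrm (t *\<^sub>R v - - (t *\<^sub>R v)) \<le> (SUP p \<in> cell0 \<delta> \<times> cell0 \<delta>. nrm (fst p - snd p))"
    using cSUP_upper[OF _ theta_bdd[OF assms(1,2)], of "(t *\<^sub>R v, - (t *\<^sub>R v))"] in1 in2 by auto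
  moreover have "t *\<^sub>R v - - (t *\<^sub>R v) = (2*t) *\<^sub>R v" by (simp only: diff_minus_eq_add mult_2 scaleR_left_distrib minus_minus)
  ultimately have "2 * t * nrm v \<le> (SUP p \<in> cell0 \<delta> \<times> cell0 \<delta>. nrm (fst p - snd p))"
    using nrm_scale[OF assms(1), of "2*t" v] t by simp
  then show "t * nrm v \<le> theta nrm \<delta>" unfolding theta_def by simp
qed

lemma roundoff_grid: "roundoff \<delta> x \<in> grid \<delta>"
  unfolding roundoff_def grid_def by (rule CollectI, rule exI[of _ "\<chi> j. \<lfloor>x $ j / \<delta> + 1/2\<rfloor>"]) simp

lemma roundoff_cell: fixes x :: "real^'n" assumes "\<delta> > 0" shows "x - roundoff \<delta> x \<in> cell0 \<delta>"
  unfolding cell0_def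
proof (intro CollectI allI)
  fix j
  define z where "z = x $ j / \<delta> + 1/2"
  have f: "of_int \<lfloor>z\<rfloor> \<le> z" "z < of_int \<lfloor>z\<rfloor> + 1" by linarith+
  have "\<delta> * of_int \<lfloor>z\<rfloor> \<le> \<delta> * z" using f assms by (intro mult_left_mono) auto
  moreover have "\<delta> * z < \<delta> * (of_int \<lfloor>z\<rfloor> + 1)" using f assms by (intro mult_strict_left_mono) auto
  then have "\<delta> * z < \<delta> * of_int \<lfloor>z\<rfloor> + \<delta>" by (simp add: distrib_left)
  moreover have "\<delta> * z = x $ j + \<delta>/2" using assms unfolding z_def by (simp add: field_simps)
  moreover have e: "(x - roundoff \<delta> x) $ j = x $ j - \<delta> * of_int \<lfloor>z\<rfloor>" by (simp add: roundoff_def z_def)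
  ultimately show "- \<delta> / 2 \<le> (x - roundoff \<delta> x) $ j \<and> (x - roundoff \<delta> x) $ j < \<delta> / 2"
    unfolding e by linarith
qed

lemma roundoff_theta: fixes x :: "real^'n" assumes "is_norm nrm" "\<delta> > 0"
  shows "nrm (roundoff \<delta> x - x) \<le> theta nrm \<delta>"
proof -
  have "nrm (x - roundoff \<delta> x) \<le> theta nrm \<delta>" by (rule cell_theta[OF assms roundoff_cell[OF assms(2)]])
  then show ?thesis using nrm_minus[OF assms(1), of "roundoff \<delta> x" x] by linarith
qed

lemma inf_le_eps: fixes f :: "'b \<Rightarrow> real"
  assumes "\<And>e. e > 0 \<Longrightarrow> \<exists>a\<in>A. f a \<le> B + e"
  shows "(INF a\<in>A. ereal (f a)) \<le> ereal B"
proof (rule ereal_le_epsilon2)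
  fix e :: real assume e: "0 < e"
  then obtain a where a: "a \<in> A" "f a \<le> B + e" using assms by blast
  have "(INF a\<in>A. ereal (f a)) \<le> ereal (f a)" by (rule INF_lower[OF a(1)])
  also have "\<dots> \<le> ereal B + ereal e" using a(2) by simp
  finally show "(INF a\<in>A. ereal (f a)) \<le> ereal B + ereal e" .
qed

lemma small: fixes l D e :: real assumes "0 \<le> l" "l < 1" "k \<ge> 1" "e > 0"
  shows "\<exists>r. l^(k*r) * D < e"
proof -
  have "e / (\<bar>D\<bar> + 1) > 0" using assms by simp
  then obtain r where r: "l^r < e / (\<bar>D\<bar> + 1)" using real_arch_pow_inv assms(2) by blast
  have "l^(k*r) \<le> l^r" using assms by (intro power_decreasing) auto
  have "l^(k*r) * D \<le> l^(k*r) * \<bar>D\<bar>" using assms by (intro mult_left_mono) auto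
  also have "\<dots> \<le> l^r * (\<bar>D\<bar> + 1)" using \<open>l^(k*r) \<le> l^r\<close> assms by (intro mult_mono) auto
  also have "\<dots> < e" using r by (simp add: field_simps)
  finally show ?thesis by blast
qed


theorem theorem14:
  fixes nrm :: "real^'n \<Rightarrow> real" and \<delta> :: real and N :: nat
    and w :: "nat \<Rightarrow> real^'n \<Rightarrow> real^'n" and lam :: "nat \<Rightarrow> real"
    and q :: "nat \<Rightarrow> real" and p :: "nat \<Rightarrow> real^'n \<Rightarrow> real"
    and A :: "(real^'n) set" and C :: "(real^'n) set"
  assumes delta_pos: "\<delta> > 0"
    and norm: "is_norm nrm"
    and N_pos: "N \<ge> 1"
    and lam: "\<And>i. i < N \<Longrightarrow> 0 \<le> lam i \<and> lam i < 1"
    and contr: "\<And>i x y. i < N \<Longrightarrow> nrm (w i x - w i y) \<le> lam i * nrm (x - y)"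
    and q: "\<And>i. i < N \<Longrightarrow> 0 < q i \<and> q i \<le> 1" "(\<Sum>i<N. q i) = 1"
    and attractor: "A \<noteq> {}" "compact A" "A = (\<Union>i<N. w i ` A)"
    and p: "\<And>i x. i < N \<Longrightarrow> x \<in> grid \<delta> \<Longrightarrow> 0 < p i x \<and> p i x \<le> 1"
           "\<And>x. x \<in> grid \<delta> \<Longrightarrow> (\<Sum>i<N. p i x) = 1"
    and C: "pos_rec_class (grid \<delta>) N (\<lambda>i x. roundoff \<delta> (w i x)) p C"
  shows "hausdorff_d nrm C A \<le> ereal (theta nrm \<delta> / (1 - Max (lam ` {..<N})))"
proof -
  define wt where "wt = (\<lambda>i x. roundoff \<delta> (w i x))"
  define l where "l = Max (lam ` {..<N})"
  define \<theta> where "\<theta> = theta nrm \<delta>"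
  define B where "B = \<theta> / (1 - l)"
  interpret M: mc "grid \<delta>" N wt p
    by unfold_locales (auto simp: wt_def roundoff_grid p)
  have fin: "finite (lam ` {..<N})" "lam ` {..<N} \<noteq> {}" using N_pos by (auto simp: lessThan_empty_iff)
  have lam_le: "lam i \<le> l" if "i < N" for i unfolding l_def using fin that by (intro Max_ge) auto
  have l01: "0 \<le> l" "l < 1"
  proof -
    have "l \<in> lam ` {..<N}" unfolding l_def using fin by (rule Max_in)
    then show "0 \<le> l" "l < 1" using lam by auto
  qed
  have Bth: "\<theta> = B * (1 - l)" unfolding B_def using l01 by simp
  have C': "pos_rec_class (grid \<delta>) N wt p C" using C unfolding wt_def .
  have CS: "C \<subseteq> grid \<delta>" "C \<noteq> {}" using C' unfolding pos_rec_class_def comm_class_def by blast+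
  have Crec: "summable (\<lambda>k. Fk N wt p k c c)" "(\<Sum>k. Fk N wt p k c c) = 1" if "c \<in> C" for c
    using C' that unfolding pos_rec_class_def pos_recurrent_def recurrent_def by blast+
  have Ccl: "y \<in> C" if "c \<in> C" "y \<in> grid \<delta>" "communicate N wt p c y" for c y
    using C' that unfolding pos_rec_class_def comm_class_def by blast
  have Cself: "communicate N wt p c c" if "c \<in> C" for c
    using C' that unfolding pos_rec_class_def comm_class_def by blast
  have Aw: "w i a \<in> A" if "i < N" "a \<in> A" for i a using attractor(3) that by blast
  have onestep: "nrm (wt i x - w i a) - B \<le> l * (nrm (x - a) - B)" if "i < N" for i x a
  proof -
    have "nrm (wt i x - w i a) \<le> nrm (wt i x - w i x) + nrm (w i x - w i a)" by (rule nrm_tri3[OF norm])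
    also have "\<dots> \<le> \<theta> + lam i * nrm (x - a)"
      using roundoff_theta[OF norm delta_pos, of "w i x"] contr[OF that, of x a] unfolding wt_def \<theta>_def by linarith
    also have "\<dots> \<le> \<theta> + l * nrm (x - a)" using lam_le[OF that] nrm_nonneg[OF norm] by (simp add: mult_right_mono)
    finally show ?thesis unfolding Bth by (simp add: algebra_simps)
  qed
  have fwd: "\<forall>x a. x \<in> grid \<delta> \<longrightarrow> a \<in> A \<longrightarrow> Pk N wt p m x y > 0 \<longrightarrow>
      (\<exists>a'\<in>A. nrm (y - a') - B \<le> l^m * (nrm (x - a) - B))" for m y
  proof (induction m)
    case 0 then show ?case by auto
  next
    case (Suc m)
    show ?case
    proof (intro allI impI)
      fix x a assume xa: "x \<in> grid \<delta>" "a \<in> A" "Pk N wt p (Suc m) x y > 0"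
      obtain j where j: "j < N" "Pk N wt p m (wt j x) y > 0" using M.Pk_step[OF xa(1,3)] by blast
      have "wt j x \<in> grid \<delta>" using M.wtS[OF j(1) xa(1)] .
      then obtain a' where a': "a' \<in> A" "nrm (y - a') - B \<le> l^m * (nrm (wt j x - w j a) - B)"
        using Suc.IH Aw[OF j(1) xa(2)] j(2) by blast
      have "l^m * (nrm (wt j x - w j a) - B) \<le> l^m * (l * (nrm (x - a) - B))"
        using onestep[OF j(1)] l01 by (intro mult_left_mono) auto
      then show "\<exists>a'\<in>A. nrm (y - a') - B \<le> l^Suc m * (nrm (x - a) - B)"
        using a' by (intro bexI[of _ a']) (auto simp: algebra_simps)
    qed
  qed
  have part1: "\<exists>a\<in>A. nrm (c - a) \<le> B + e" if c: "c \<in> C" and e: "e > 0" for c e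
  proof -
    obtain k where k: "k \<ge> 1" "Pk N wt p k c c > 0"
      using Cself[OF c] unfolding communicate_def accessible_def by blast
    obtain a0 where a0: "a0 \<in> A" using attractor(1) by blast
    have cg: "c \<in> grid \<delta>" using c CS by auto
    have it: "\<exists>a\<in>A. nrm (c - a) - B \<le> l^(k*r) * (nrm (c - a0) - B)" for r
    proof (induction r)
      case 0 then show ?case using a0 by auto
    next
      case (Suc r)
      then obtain a where a: "a \<in> A" "nrm (c - a) - B \<le> l^(k*r) * (nrm (c - a0) - B)" by blast
      obtain a' where a': "a' \<in> A" "nrm (c - a') - B \<le> l^k * (nrm (c - a) - B)"
        using fwd[of k c] cg a(1) k(2) by blast
      have "l^k * (nrm (c - a) - B) \<le> l^k * (l^(k*r) * (nrm (c - a0) - B))"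
        using a(2) l01 by (intro mult_left_mono) auto
      then show ?case using a' by (intro bexI[of _ a']) (auto simp: power_add mult.assoc)
    qed
    obtain r where r: "l^(k*r) * (nrm (c - a0) - B) < e" using small[OF l01 k(1) e] by blast
    obtain a where "a \<in> A" "nrm (c - a) - B \<le> l^(k*r) * (nrm (c - a0) - B)" using it[of r] by blast
    then show ?thesis using r by (intro bexI[of _ a]) auto
  qed
  obtain x0 where x0: "x0 \<in> C" using CS by blast
  have bwd: "\<forall>a\<in>A. \<exists>c\<in>C. \<exists>a0\<in>A. nrm (c - a) - B \<le> l^m * (nrm (x0 - a0) - B)" for m
  proof (induction m)
    case 0 then show ?case using x0 by auto
  next
    case (Suc m)
    show ?case
    proof
      fix a assume a: "a \<in> A"
      then obtain i a1 where ia: "i < N" "a1 \<in> A" "a = w i a1" using attractor(3) by blast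
      obtain c1 a0 where c1: "c1 \<in> C" "a0 \<in> A" "nrm (c1 - a1) - B \<le> l^m * (nrm (x0 - a0) - B)"
        using Suc.IH ia(2) by blast
      have c1g: "c1 \<in> grid \<delta>" using c1 CS by auto
      have acc: "accessible N wt p c1 (wt i c1)" unfolding accessible_def
        using M.Pk_one[OF c1g ia(1)] by (intro exI[of _ "Suc 0"]) auto
      then obtain k where "Pk N wt p k c1 (wt i c1) > 0" unfolding accessible_def by blast
      then have acc2: "accessible N wt p (wt i c1) c1" using M.closed[OF c1g Crec[OF c1(1)]] by blast
      have "wt i c1 \<in> C" using Ccl[OF c1(1) M.wtS[OF ia(1) c1g]] acc acc2 unfolding communicate_def by blast
      moreover have "nrm (wt i c1 - a) - B \<le> l * (nrm (c1 - a1) - B)" using onestep[OF ia(1)] ia(3) by simp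
      moreover have "l * (nrm (c1 - a1) - B) \<le> l * (l^m * (nrm (x0 - a0) - B))"
        using c1(3) l01 by (intro mult_left_mono) auto
      ultimately show "\<exists>c\<in>C. \<exists>a0\<in>A. nrm (c - a) - B \<le> l^Suc m * (nrm (x0 - a0) - B)"
        using c1(2) by (intro bexI[of _ "wt i c1"] bexI[of _ a0]) (auto simp: mult.assoc)
    qed
  qed
  obtain R where R: "\<forall>a\<in>A. norm a \<le> R" using compact_imp_bounded[OF attractor(2)] unfolding bounded_iff by blast
  define K where "K = (\<Sum>j\<in>UNIV. nrm (axis j 1 :: real^'n))"
  have K0: "K \<ge> 0" unfolding K_def by (intro sum_nonneg nrm_nonneg[OF norm])
  define Mb where "Mb = K * (norm x0 + R) + \<bar>B\<bar>"
  have Mb: "nrm (x0 - a0) - B \<le> Mb" if "a0 \<in> A" for a0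
  proof -
    have "nrm (x0 - a0) \<le> K * norm (x0 - a0)" unfolding K_def by (rule nrm_le_norm[OF norm])
    also have "\<dots> \<le> K * (norm x0 + R)" using K0 R that norm_triangle_ineq4[of x0 a0]
      by (intro mult_left_mono) auto
    finally show ?thesis unfolding Mb_def by linarith
  qed
  have part2: "\<exists>c\<in>C. nrm (c - a) \<le> B + e" if a: "a \<in> A" and e: "e > 0" for a e
  proof -
    obtain r where r: "l^(1*r) * Mb < e" using small[OF l01 _ e] by blast
    obtain c a0 where c: "c \<in> C" "a0 \<in> A" "nrm (c - a) - B \<le> l^r * (nrm (x0 - a0) - B)"
      using bwd a by blast
    have "l^r * (nrm (x0 - a0) - B) \<le> l^r * Mb" using Mb[OF c(2)] l01 by (intro mult_left_mono) auto
    then show ?thesis using c r by (intro bexI[of _ c]) auto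
  qed
  have "hausdorff_d nrm C A \<le> ereal B"
    unfolding hausdorff_d_def max.bounded_iff
  proof
    show "(SUP a\<in>C. INF b\<in>A. ereal (nrm (a - b))) \<le> ereal B"
      by (rule SUP_least, rule inf_le_eps) (use part1 in blast)
    show "(SUP b\<in>A. INF a\<in>C. ereal (nrm (a - b))) \<le> ereal B"
      by (rule SUP_least, rule inf_le_eps) (use part2 in blast)
  qed
  then show ?thesis unfolding B_def \<theta>_def l_def .
qed


end
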